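(* Let $X$ be a proper CAT(0)-space and $g$ an isometry of $X$ with unbounded orbits. Then the centralizer of $g$ in the isometry group of $X$ fixes a point in the visual boundary $\partial X$ of $X$.
   Context: A metric space is proper if closed bounded sets are compact. The visual boundary $\partial X$ of a proper CAT(0)-space is the set of equivalence classes of geodesic rays (two rays equivalent if at bounded distance), with the cone topology; isometries act on it naturally. *)

theory Defs
  imports "HOL-Analysis.Analysis"
begin

text \<open>The whole type 'a (a metric space) plays the role of the space X.\<close>

definition proper_space :: "'a::metric_space itself \<Rightarrow> bool" where
  "proper_space _ \<longleftrightarrow> (\<forall>S::'a set. closed S \<and> bounded S \<longrightarrow> compact S)"

definition geodesic_segment :: "(real \<Rightarrow> 'a::metric_space) \<Rightarrow> 'a \<Rightarrow> 'a \<Rightarrow> bool" where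
  "geodesic_segment c x y \<longleftrightarrow> c 0 = x \<and> c (dist x y) = y \<and>
     (\<forall>s\<in>{0..dist x y}. \<forall>t\<in>{0..dist x y}. dist (c s) (c t) = \<bar>s - t\<bar>)"

definition geodesic_space :: "'a::metric_space itself \<Rightarrow> bool" where
  "geodesic_space _ \<longleftrightarrow> (\<forall>x y::'a. \<exists>c. geodesic_segment c x y)"

text \<open>Point of the Euclidean segment [a,b] at distance t from a (where d = |a - b|).\<close>
definition seg_pt :: "real^2 \<Rightarrow> real^2 \<Rightarrow> real \<Rightarrow> real \<Rightarrow> real^2" where
  "seg_pt a b d t = (1 - t / d) *\<^sub>R a + (t / d) *\<^sub>R b"

text \<open>Pairs (point on the geodesic triangle, its comparison point in the Euclidean plane).\<close>
definition comparison_pairs ::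
  "(real \<Rightarrow> 'a::metric_space) \<Rightarrow> (real \<Rightarrow> 'a) \<Rightarrow> (real \<Rightarrow> 'a) \<Rightarrow> 'a \<Rightarrow> 'a \<Rightarrow> 'a
   \<Rightarrow> real^2 \<Rightarrow> real^2 \<Rightarrow> real^2 \<Rightarrow> ('a \<times> (real^2)) set" where
  "comparison_pairs c1 c2 c3 x y z u v w =
     {(c1 s, seg_pt u v (dist x y) s) | s. s \<in> {0..dist x y}} \<union>
     {(c2 s, seg_pt v w (dist y z) s) | s. s \<in> {0..dist y z}} \<union>
     {(c3 s, seg_pt w u (dist z x) s) | s. s \<in> {0..dist z x}}"

definition CAT0 :: "'a::metric_space itself \<Rightarrow> bool" where
  "CAT0 T \<longleftrightarrow> geodesic_space T \<and>
    (\<forall>(x::'a) y z c1 c2 c3 (u::real^2) v w.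
       geodesic_segment c1 x y \<and> geodesic_segment c2 y z \<and> geodesic_segment c3 z x \<and>
       dist u v = dist x y \<and> dist v w = dist y z \<and> dist w u = dist z x \<longrightarrow>
       (\<forall>(p, p') \<in> comparison_pairs c1 c2 c3 x y z u v w.
         \<forall>(q, q') \<in> comparison_pairs c1 c2 c3 x y z u v w. dist p q \<le> dist p' q'))"

definition isometries :: "('a::metric_space \<Rightarrow> 'a) set" where
  "isometries = {f. bij f \<and> (\<forall>x y. dist (f x) (f y) = dist x y)}"

definition centralizer :: "('a::metric_space \<Rightarrow> 'a) \<Rightarrow> ('a \<Rightarrow> 'a) set" where
  "centralizer g = {h \<in> isometries. h \<circ> g = g \<circ> h}"

definition cyclic_orbit :: "('a \<Rightarrow> 'a) \<Rightarrow> 'a \<Rightarrow> 'a set" where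
  "cyclic_orbit g x = {(g ^^ n) x | n. True} \<union> {(inv g ^^ n) x | n. True}"

definition geodesic_ray :: "(real \<Rightarrow> 'a::metric_space) \<Rightarrow> bool" where
  "geodesic_ray c \<longleftrightarrow> (\<forall>s\<ge>0. \<forall>t\<ge>0. dist (c s) (c t) = \<bar>s - t\<bar>)"

definition asymptotic :: "(real \<Rightarrow> 'a::metric_space) \<Rightarrow> (real \<Rightarrow> 'a) \<Rightarrow> bool" where
  "asymptotic c c' \<longleftrightarrow> (\<exists>B. \<forall>t\<ge>0. dist (c t) (c' t) \<le> B)"

definition visual_boundary :: "'a::metric_space itself \<Rightarrow> (real \<Rightarrow> 'a) set set" where
  "visual_boundary _ = {{c'. geodesic_ray c' \<and> asymptotic c c'} | c. geodesic_ray c}"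

definition boundary_action :: "('a \<Rightarrow> 'a) \<Rightarrow> (real \<Rightarrow> 'a) set \<Rightarrow> (real \<Rightarrow> 'a) set" where
  "boundary_action h \<xi> = {h \<circ> c | c. c \<in> \<xi>}"

end

theory Submission
  imports Defs
begin

lemma compact_Pi_balls:
  fixes x0 :: "'a::metric_space"
  assumes "proper_space TYPE('a)"
  shows "compact (PiE UNIV (\<lambda>t::real. cball x0 \<bar>t\<bar>))"
proof -
  have "\<And>t::real. compact (cball x0 \<bar>t\<bar>)"
    using assms unfolding proper_space_def by auto
  then have "compactin (product_topology (\<lambda>_. euclidean) UNIV) (PiE UNIV (\<lambda>t::real. cball x0 \<bar>t\<bar>))"
    by (simp add: compactin_PiE compactin_euclidean_iff)
  then show ?thesis
    by (simp add: euclidean_product_topology compactin_euclidean_iff)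
qed

lemma cluster_closed:
  assumes "inf (nhds c) F \<noteq> bot" "closed {f. P f}" "eventually P F"
  shows "P c"
proof (rule ccontr)
  assume "\<not> P c"
  then have "eventually (\<lambda>f. f \<in> - {f. P f}) (nhds c)"
    using assms(2) by (intro eventually_nhds_in_open) auto
  then have "eventually (\<lambda>f. False) (inf (nhds c) F)"
    using assms(3) unfolding eventually_inf by (intro exI[of _ "\<lambda>f. \<not> P f"] exI[of _ P]) auto
  then show False using assms(1) by (simp add: eventually_False)
qed

lemma norm_vec2: "norm (vector [x, y] :: real^2) = sqrt (x\<^sup>2 + y\<^sup>2)"
  by (simp add: norm_vec_def L2_set_def sum_2)

lemma vec2_diff: "(vector [a, b] :: real^2) - vector [c, d] = vector [a - c, b - d]"
  by (simp add: vec_eq_iff forall_2)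

lemma comparison_triangle:
  fixes a b e :: real
  assumes "0 \<le> a" "0 \<le> b" "0 \<le> e" "e \<le> a + b" "a \<le> b + e" "b \<le> a + e"
  shows "\<exists>u v w :: real^2. dist u v = a \<and> dist v w = e \<and> dist w u = b"
proof (cases "a = 0")
  case True
  then have "e = b" using assms by auto
  show ?thesis
    apply (rule exI[of _ "vector [0, 0]"], rule exI[of _ "vector [0, 0]"], rule exI[of _ "vector [b, 0]"])
    using True \<open>e = b\<close> assms by (simp add: dist_norm norm_vec2 vec2_diff)
next
  case False
  then have apos: "a > 0" using assms by auto
  define p where "p = (a\<^sup>2 + b\<^sup>2 - e\<^sup>2) / (2 * a)"
  have "(a\<^sup>2 + b\<^sup>2 - e\<^sup>2)\<^sup>2 \<le> (2*a*b)\<^sup>2"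
  proof -
    have "(2*a*b)\<^sup>2 - (a\<^sup>2 + b\<^sup>2 - e\<^sup>2)\<^sup>2 = (e\<^sup>2 - (a-b)\<^sup>2) * ((a+b)\<^sup>2 - e\<^sup>2)"
      by (simp add: power2_eq_square algebra_simps)
    moreover have "e\<^sup>2 - (a-b)\<^sup>2 \<ge> 0"
      using assms by (simp add: abs_le_square_iff[symmetric] abs_le_iff) 
    moreover have "(a+b)\<^sup>2 - e\<^sup>2 \<ge> 0"
      using assms by (simp add: abs_le_square_iff[symmetric])
    ultimately show ?thesis by (metis diff_ge_0_iff_ge zero_le_mult_iff)
  qed
  then have "p\<^sup>2 \<le> b\<^sup>2"
    using apos unfolding p_def by (simp add: power_divide field_simps power2_eq_square)
  define q where "q = sqrt (b\<^sup>2 - p\<^sup>2)"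
  have q2: "q\<^sup>2 = b\<^sup>2 - p\<^sup>2" unfolding q_def using \<open>p\<^sup>2 \<le> b\<^sup>2\<close> by simp
  have d1: "dist (vector [0, 0] :: real^2) (vector [a, 0]) = a"
    using apos by (simp add: dist_norm norm_vec2 vec2_diff)
  have d3: "dist (vector [p, q] :: real^2) (vector [0, 0]) = b"
    using q2 assms by (simp add: dist_norm norm_vec2 vec2_diff)
  have "(a - p)\<^sup>2 + q\<^sup>2 = e\<^sup>2"
    using q2 apos unfolding p_def by (simp add: power2_eq_square field_simps)
  then have d2: "dist (vector [a, 0] :: real^2) (vector [p, q]) = e"
    using assms by (simp add: dist_norm norm_vec2 vec2_diff)
  show ?thesis using d1 d2 d3 by blast
qed

lemma geo_rev:
  assumes "geodesic_segment c x y"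
  shows "geodesic_segment (\<lambda>s. c (dist x y - s)) y x"
  using assms unfolding geodesic_segment_def
  by (auto simp: dist_commute)

lemma geo_img:
  assumes "geodesic_segment c x y" "\<forall>a b. dist (h a) (h b) = dist a b"
  shows "geodesic_segment (h \<circ> c) (h x) (h y)"
  using assms unfolding geodesic_segment_def by auto

lemma seg_pt_lin:
  assumes "dist u v = a" "0 \<le> l"
  shows "seg_pt u v a (l * a) = (1 - l) *\<^sub>R u + l *\<^sub>R v"
proof (cases "a = 0")
  case True
  then have "u = v" using assms by simp
  then show ?thesis using True by (simp add: seg_pt_def scaleR_diff_left)
next
  case False
  then show ?thesis by (simp add: seg_pt_def)
qed

lemma cat0_convex:
  fixes x y z :: "'a::metric_space"
  assumes cat: "CAT0 TYPE('a)" and g1: "geodesic_segment \<sigma> x y" and g2: "geodesic_segment \<tau> x z"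
    and l: "0 \<le> l" "l \<le> 1"
  shows "dist (\<sigma> (l * dist x y)) (\<tau> (l * dist x z)) \<le> l * dist y z"
proof -
  have gs: "geodesic_space TYPE('a)" using cat unfolding CAT0_def by blast
  obtain c2 where c2: "geodesic_segment c2 y z" using gs unfolding geodesic_space_def by blast
  define c3 where "c3 = (\<lambda>s. \<tau> (dist x z - s))"
  have c3: "geodesic_segment c3 z x" unfolding c3_def using geo_rev[OF g2] .
  obtain u v w :: "real^2" where uvw: "dist u v = dist x y" "dist v w = dist y z" "dist w u = dist z x"
    using comparison_triangle[of "dist x y" "dist z x" "dist y z"]
    by (metis dist_commute dist_triangle zero_le_dist add.commute)
  define P where "P = comparison_pairs \<sigma> c2 c3 x y z u v w"
  have all: "\<forall>(p, p') \<in> P. \<forall>(q, q') \<in> P. dist p q \<le> dist p' q'"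
    using cat g1 c2 c3 uvw unfolding CAT0_def P_def by blast
  have m1: "(\<sigma> (l * dist x y), seg_pt u v (dist x y) (l * dist x y)) \<in> P"
    unfolding P_def comparison_pairs_def using l by (auto intro!: mult_left_le_one_le)
  have m2: "(c3 ((1 - l) * dist z x), seg_pt w u (dist z x) ((1 - l) * dist z x)) \<in> P"
    unfolding P_def comparison_pairs_def using l by (auto intro!: mult_left_le_one_le)
  have "dist (\<sigma> (l * dist x y)) (c3 ((1 - l) * dist z x))
      \<le> dist (seg_pt u v (dist x y) (l * dist x y)) (seg_pt w u (dist z x) ((1 - l) * dist z x))"
    using all m1 m2 by fast
  also have "seg_pt u v (dist x y) (l * dist x y) = (1 - l) *\<^sub>R u + l *\<^sub>R v"
    using seg_pt_lin[OF uvw(1) l(1)] .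
  also have "seg_pt w u (dist z x) ((1 - l) * dist z x) = (1 - (1 - l)) *\<^sub>R w + (1 - l) *\<^sub>R u"
    using seg_pt_lin[OF uvw(3)] l by simp
  also have "dist ((1 - l) *\<^sub>R u + l *\<^sub>R v) ((1 - (1 - l)) *\<^sub>R w + (1 - l) *\<^sub>R u) = l * dist v w"
  proof -
    have "((1 - l) *\<^sub>R u + l *\<^sub>R v) - ((1 - (1 - l)) *\<^sub>R w + (1 - l) *\<^sub>R u) = l *\<^sub>R (v - w)"
      by (simp add: algebra_simps)
    then show ?thesis using l by (simp add: dist_norm)
  qed
  also have "c3 ((1 - l) * dist z x) = \<tau> (l * dist x z)"
    unfolding c3_def by (simp add: dist_commute algebra_simps)
  finally show ?thesis using uvw by simp
qed

lemma key_est: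
  fixes x0 q :: "'a::metric_space"
  assumes cat: "CAT0 TYPE('a)" and iso: "\<forall>a b. dist (h a) (h b) = dist a b"
    and g: "geodesic_segment \<sigma> x0 q" and t: "0 \<le> t" "t \<le> dist x0 q" and L: "0 < dist x0 q"
  shows "dist (\<sigma> t) (h (\<sigma> t)) \<le> dist x0 (h x0) + dist q (h q)"
proof -
  define L where "L = dist x0 q"
  have gs: "geodesic_space TYPE('a)" using cat unfolding CAT0_def by blast
  obtain \<tau> where tau: "geodesic_segment \<tau> x0 (h q)" using gs unfolding geodesic_space_def by blast
  define L' where "L' = dist x0 (h q)"
  define l where "l = t / L"
  have l: "0 \<le> l" "l \<le> 1" using t L unfolding l_def L_def by auto
  have tl: "t = l * L" unfolding l_def using L L_def by simp
  have e1: "dist (\<sigma> t) (\<tau> (l * L')) \<le> l * dist q (h q)"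
    using cat0_convex[OF cat g tau l] tl unfolding L_def L'_def by simp
  have r1: "geodesic_segment (\<lambda>s. \<tau> (dist x0 (h q) - s)) (h q) x0" using geo_rev[OF tau] .
  have r2: "geodesic_segment (\<lambda>s. (h \<circ> \<sigma>) (dist (h x0) (h q) - s)) (h q) (h x0)"
    using geo_rev[OF geo_img[OF g iso]] .
  have e2: "dist (\<tau> (dist x0 (h q) - (1 - l) * dist (h q) x0))
      ((h \<circ> \<sigma>) (dist (h x0) (h q) - (1 - l) * dist (h q) (h x0))) \<le> (1 - l) * dist x0 (h x0)"
    using cat0_convex[OF cat r1 r2, of "1 - l"] l by simp
  have a1: "dist x0 (h q) - (1 - l) * dist (h q) x0 = l * L'"
    unfolding L'_def by (simp add: dist_commute algebra_simps)
  have a2: "dist (h x0) (h q) - (1 - l) * dist (h q) (h x0) = t"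
    using iso tl unfolding L_def by (simp add: dist_commute algebra_simps)
  have e2': "dist (\<tau> (l * L')) (h (\<sigma> t)) \<le> (1 - l) * dist x0 (h x0)"
    using e2 unfolding a1 a2 by simp
  have "dist (\<sigma> t) (h (\<sigma> t)) \<le> dist (\<sigma> t) (\<tau> (l * L')) + dist (\<tau> (l * L')) (h (\<sigma> t))"
    by (rule dist_triangle)
  also have "\<dots> \<le> l * dist q (h q) + (1 - l) * dist x0 (h x0)"
    using e1 e2' by simp
  also have "\<dots> \<le> dist q (h q) + dist x0 (h x0)"
    using l by (intro add_mono mult_left_le_one_le) auto
  finally show ?thesis by simp
qed

lemma pow_comm: assumes "\<forall>x. h (f x) = f (h x)" shows "h ((f ^^ n) x) = (f ^^ n) (h x)"
  by (induction n) (simp_all add: assms)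

lemma pow_iso: fixes f :: "'a::metric_space \<Rightarrow> 'a" assumes "\<forall>a b. dist (f a) (f b) = dist a b" shows "dist ((f ^^ n) a) ((f ^^ n) b) = dist a b"
  by (induction n) (simp_all add: assms)

lemma inv_iso:
  assumes "bij f" "\<forall>a b. dist (f a) (f b) = dist a b"
  shows "\<forall>a b. dist (inv f a) (inv f b) = dist a b"
  using assms by (metis bij_is_surj surj_f_inv_f)

lemma iso_cont:
  assumes "\<forall>a b. dist (h a) (h b) = dist a b"
  shows "continuous_on UNIV h"
  unfolding continuous_on_iff using assms by (metis UNIV_I)

lemma orbit_disp:
  fixes g :: "'a::metric_space \<Rightarrow> 'a"
  assumes g: "g \<in> isometries" and h: "h \<in> centralizer g" and q: "q \<in> cyclic_orbit g x0"
  shows "dist q (h q) = dist x0 (h x0)"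
proof -
  have bg: "bij g" and ig: "\<forall>a b. dist (g a) (g b) = dist a b" using g unfolding isometries_def by auto
  have hg: "h \<circ> g = g \<circ> h" using h unfolding centralizer_def by auto
  have c1: "\<forall>x. h (g x) = g (h x)" using hg by (metis comp_apply)
  have c2: "\<forall>y. h (inv g y) = inv g (h y)"
  proof
    fix y
    have "g (h (inv g y)) = h y" using c1 bg by (metis bij_is_surj surj_f_inv_f)
    then show "h (inv g y) = inv g (h y)" using bg by (metis bij_is_inj inv_f_f)
  qed
  have ii: "\<forall>a b. dist (inv g a) (inv g b) = dist a b" using inv_iso[OF bg ig] .
  from q obtain n where "q = (g ^^ n) x0 \<or> q = (inv g ^^ n) x0" unfolding cyclic_orbit_def by auto
  then show ?thesis
  proof
    assume "q = (g ^^ n) x0"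
    then show ?thesis using pow_comm[OF c1] pow_iso[OF ig] by simp
  next
    assume "q = (inv g ^^ n) x0"
    then show ?thesis using pow_comm[OF c2] pow_iso[OF ii] by simp
  qed
qed

lemma geo_start: "geodesic_segment c x y \<Longrightarrow> 0 \<le> s \<Longrightarrow> s \<le> dist x y \<Longrightarrow> dist x (c s) = s"
  unfolding geodesic_segment_def by (metis abs_of_nonneg atLeastAtMost_iff diff_0 abs_minus_cancel dist_self order.refl zero_le_dist)

theorem proposition19:
  fixes g :: "'a::metric_space \<Rightarrow> 'a"
  assumes "proper_space TYPE('a)"
    and "CAT0 TYPE('a)"
    and "g \<in> isometries"
    and "\<forall>x. \<not> bounded (cyclic_orbit g x)"
  shows "\<exists>\<xi> \<in> visual_boundary TYPE('a). \<forall>h \<in> centralizer g. boundary_action h \<xi> = \<xi>"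
proof -
  note cat = assms(2)
  define x0 :: 'a where "x0 = undefined"
  have ub: "\<forall>e. \<exists>y\<in>cyclic_orbit g x0. dist x0 y > e"
    using assms(4) unfolding bounded_any_center[where a = x0] by (metis not_le)
  then have "\<forall>k::nat. \<exists>y. y \<in> cyclic_orbit g x0 \<and> dist x0 y > real k" by blast
  then obtain q where q': "\<forall>k::nat. q k \<in> cyclic_orbit g x0 \<and> dist x0 (q k) > real k"
    using choice[of "\<lambda>k y. y \<in> cyclic_orbit g x0 \<and> dist x0 y > real k"] by blast
  then have q: "\<And>k::nat. q k \<in> cyclic_orbit g x0" "\<And>k::nat. dist x0 (q k) > real k" by auto
  define L where "L k = dist x0 (q k)" for k
  have gs: "geodesic_space TYPE('a)" using cat unfolding CAT0_def by blast
  define \<sigma> where "\<sigma> k = (SOME c. geodesic_segment c x0 (q k))" for k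
  have \<sigma>: "geodesic_segment (\<sigma> k) x0 (q k)" for k
    unfolding \<sigma>_def using gs unfolding geodesic_space_def by (metis someI_ex)
  define \<gamma> where "\<gamma> k t = \<sigma> k (max 0 (min t (L k)))" for k t
  define S where "S = PiE UNIV (\<lambda>t::real. cball x0 \<bar>t\<bar>)"
  have cS: "compact S" unfolding S_def using compact_Pi_balls[OF assms(1)] .
  define F where "F = filtermap \<gamma> sequentially"
  have Fnb: "F \<noteq> bot" unfolding F_def by (simp add: filtermap_bot_iff)
  have "\<gamma> k \<in> S" for k
  proof -
    have "dist x0 (\<gamma> k t) \<le> \<bar>t\<bar>" for t
    proof -
      have "L k \<ge> 0" unfolding L_def by simp
      then have "dist x0 (\<gamma> k t) = max 0 (min t (L k))"
        unfolding \<gamma>_def using geo_start[OF \<sigma>] unfolding L_def by auto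
      then show ?thesis by auto
    qed
    then show ?thesis unfolding S_def by auto
  qed
  then have "eventually (\<lambda>f. f \<in> S) F" unfolding F_def by (simp add: eventually_filtermap)
  then obtain c where cS': "c \<in> S" and cl: "inf (nhds c) F \<noteq> bot"
    using cS Fnb unfolding compact_filter by blast
  have ev_eq: "eventually (\<lambda>k. \<gamma> k t = \<sigma> k t \<and> t \<le> L k) sequentially" if "t \<ge> 0" for t
  proof -
    have "\<forall>k\<ge>nat \<lceil>t\<rceil>. \<gamma> k t = \<sigma> k t \<and> t \<le> L k"
    proof (intro allI impI)
      fix k assume "k \<ge> nat \<lceil>t\<rceil>"
      then have "t \<le> real k" by linarith
      then have "t \<le> L k" using q(2)[of k] unfolding L_def by linarith
      then show "\<gamma> k t = \<sigma> k t \<and> t \<le> L k" unfolding \<gamma>_def using that by simp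
    qed
    then show ?thesis unfolding eventually_sequentially by blast
  qed
  have ray: "geodesic_ray c"
    unfolding geodesic_ray_def
  proof (intro allI impI)
    fix s t :: real assume st: "0 \<le> s" "0 \<le> t"
    have "closed {f::real \<Rightarrow> 'a. dist (f s) (f t) = \<bar>s - t\<bar>}"
      by (intro closed_Collect_eq continuous_intros continuous_on_product_coordinates)
    moreover have "eventually (\<lambda>f. dist (f s) (f t) = \<bar>s - t\<bar>) F"
      unfolding F_def eventually_filtermap
      using eventually_conj[OF ev_eq[OF st(1)] ev_eq[OF st(2)]]
    proof (rule eventually_mono)
      fix k assume "(\<gamma> k s = \<sigma> k s \<and> s \<le> L k) \<and> \<gamma> k t = \<sigma> k t \<and> t \<le> L k"
      then show "dist (\<gamma> k s) (\<gamma> k t) = \<bar>s - t\<bar>"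
        using \<sigma>[of k] st unfolding geodesic_segment_def L_def by auto
    qed
    ultimately show "dist (c s) (c t) = \<bar>s - t\<bar>"
      using cluster_closed[OF cl, of "\<lambda>f. dist (f s) (f t) = \<bar>s - t\<bar>"] by simp
  qed
  have hc: "dist (c t) (h (c t)) \<le> 2 * dist x0 (h x0)" if h: "h \<in> centralizer g" and t: "t \<ge> 0" for h t
  proof -
    have ih: "\<forall>a b. dist (h a) (h b) = dist a b" using h unfolding centralizer_def isometries_def by auto
    have hcont: "continuous_on UNIV h" using iso_cont[OF ih] .
    have "continuous_on UNIV (\<lambda>f::real \<Rightarrow> 'a. h (f t))"
      by (rule continuous_on_compose2[OF hcont continuous_on_product_coordinates]) auto
    then have "closed {f::real \<Rightarrow> 'a. dist (f t) (h (f t)) \<le> 2 * dist x0 (h x0)}"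
      by (intro closed_Collect_le continuous_intros continuous_on_product_coordinates)
    moreover have "eventually (\<lambda>f. dist (f t) (h (f t)) \<le> 2 * dist x0 (h x0)) F"
      unfolding F_def eventually_filtermap
      using ev_eq[OF t]
    proof (rule eventually_mono)
      fix k assume k: "\<gamma> k t = \<sigma> k t \<and> t \<le> L k"
      have Lp: "0 < dist x0 (q k)" using q(2)[of k] by linarith
      have "dist (\<sigma> k t) (h (\<sigma> k t)) \<le> dist x0 (h x0) + dist (q k) (h (q k))"
        using key_est[OF cat ih \<sigma>[of k] t _ Lp] k unfolding L_def by simp
      also have "dist (q k) (h (q k)) = dist x0 (h x0)" using orbit_disp[OF assms(3) h q(1)] .
      finally show "dist (\<gamma> k t) (h (\<gamma> k t)) \<le> 2 * dist x0 (h x0)" using k by simp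
    qed
    ultimately show ?thesis
      using cluster_closed[OF cl, of "\<lambda>f. dist (f t) (h (f t)) \<le> 2 * dist x0 (h x0)"] by simp
  qed
  define \<xi> where "\<xi> = {c'. geodesic_ray c' \<and> asymptotic c c'}"
  have "\<xi> \<in> visual_boundary TYPE('a)" unfolding \<xi>_def visual_boundary_def using ray by blast
  moreover have "boundary_action h \<xi> = \<xi>" if h: "h \<in> centralizer g" for h
  proof -
    have bh: "bij h" and ih: "\<forall>a b. dist (h a) (h b) = dist a b"
      using h unfolding centralizer_def isometries_def by auto
    have iih: "\<forall>a b. dist (inv h a) (inv h b) = dist a b" using inv_iso[OF bh ih] .
    define D where "D = 2 * dist x0 (h x0)"
    have hcD: "\<And>t. t \<ge> 0 \<Longrightarrow> dist (c t) (h (c t)) \<le> D" using hc[OF h] unfolding D_def by blast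
    show ?thesis
    proof (rule set_eqI, rule iffI)
      fix x assume "x \<in> boundary_action h \<xi>"
      then obtain c' where x: "x = h \<circ> c'" and c': "c' \<in> \<xi>" unfolding boundary_action_def by blast
      from c' obtain B where B: "\<forall>t\<ge>0. dist (c t) (c' t) \<le> B" and r': "geodesic_ray c'"
        unfolding \<xi>_def asymptotic_def by blast
      have "geodesic_ray x" using r' ih unfolding x geodesic_ray_def by simp
      moreover have "\<forall>t\<ge>0. dist (c t) (x t) \<le> D + B"
      proof (intro allI impI)
        fix t :: real assume t: "t \<ge> 0"
        have "dist (c t) (h (c' t)) \<le> dist (c t) (h (c t)) + dist (h (c t)) (h (c' t))"
          by (rule dist_triangle)
        then show "dist (c t) (x t) \<le> D + B" using hcD[OF t] B t ih unfolding x by fastforce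
      qed
      ultimately show "x \<in> \<xi>" unfolding \<xi>_def asymptotic_def by blast
    next
      fix x assume x: "x \<in> \<xi>"
      from x obtain B where B: "\<forall>t\<ge>0. dist (c t) (x t) \<le> B" and r': "geodesic_ray x"
        unfolding \<xi>_def asymptotic_def by blast
      define c' where "c' = inv h \<circ> x"
      have xe: "x = h \<circ> c'" unfolding c'_def using bh
        by (auto simp: fun_eq_iff bij_is_surj surj_f_inv_f)
      have "geodesic_ray c'" using r' iih unfolding c'_def geodesic_ray_def by simp
      moreover have "\<forall>t\<ge>0. dist (c t) (c' t) \<le> D + B"
      proof (intro allI impI)
        fix t :: real assume t: "t \<ge> 0"
        have "dist (c t) (c' t) = dist (h (c t)) (x t)"
          using ih xe by (metis comp_apply)
        also have "\<dots> \<le> dist (h (c t)) (c t) + dist (c t) (x t)" by (rule dist_triangle)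
        finally have "dist (c t) (c' t) \<le> dist (h (c t)) (c t) + dist (c t) (x t)" .
        moreover have "dist (c t) (x t) \<le> B" using B t by blast
        moreover have "dist (h (c t)) (c t) \<le> D" using hcD[OF t] by (simp add: dist_commute)
        ultimately show "dist (c t) (c' t) \<le> D + B" by linarith
      qed
      ultimately have "c' \<in> \<xi>" unfolding \<xi>_def asymptotic_def by blast
      then show "x \<in> boundary_action h \<xi>" unfolding boundary_action_def xe by blast
    qed
  qed
  ultimately show ?thesis by blast
qed

end
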